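(* Let $n,n'\in\mathbb{N}$, $\mathbb{K}$ a field, $R=\mathbb{K}[X_1,\ldots,X_n]$, $R'=\mathbb{K}[X_1,\ldots,X_{n'}]$, and $J\subsetneq I\subset R$ monomial ideals. Let $\phi:\mathbb{N}^n\to\mathbb{N}^{n'}$ be a map, $\Phi:R\to R'$ the $\mathbb{K}$-linear map with $\Phi(X^a)=X^{\phi(a)}$ on monomials, and let $I'$, $J'\subset R'$ be the ideals generated by $\Phi(I)$ resp. $\Phi(J)$. Let $\Omega$ be a finite set, let $I/J=\bigoplus_{i\in\Omega}X^{a_i}\mathbb{K}[Z_i]$ be a Stanley decomposition of $I/J$, and let $Z_i'$, $i\in\Omega$, be subsets of $\{X_1,\ldots,X_{n'}\}$. Assume that $\phi$ is injective, monotonic and preserves joins, and that \[\Phi(X^{a_i})\mathbb{K}[Z_i']\cap\Phi(R)=\Phi(X^{a_i}\mathbb{K}[Z_i])\quad\text{for each } i\in\Omega.\] Let $V=\sum_{i\in\Omega}\Phi(X^{a_i})\mathbb{K}[Z_i']$ as a graded vector space. Then this sum is direct, $V=\bigoplus_{i\in\Omega}\Phi(X^{a_i})\mathbb{K}[Z_i']$, and $V\subset I'/J'$ (i.e. $V$ is spanned by monomials lying in $I'\setminus J'$).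
   Context: $\mathbb{N}^n$ carries the componentwise partial order, with join $\vee$ the componentwise maximum; monotonic means order-preserving; preserving joins means $\phi(a\vee b)=\phi(a)\vee\phi(b)$. A Stanley decomposition of $I/J$ (fine multigrading) is a finite family of pairs $(\mathbb{K}[Z_i], X^{a_i})$, with $Z_i$ a subset of the variables and $X^{a_i}\mathbb{K}[Z_i]$ free over $\mathbb{K}[Z_i]$, such that $I/J=\bigoplus_i X^{a_i}\mathbb{K}[Z_i]$ as multigraded $\mathbb{K}$-vector spaces. *)

theory Defs
  imports Main
begin

text \<open>Exponent vectors in N^n: functions nat => nat vanishing from index n on.
  Variable X_(j+1) corresponds to index j < n.  The componentwise order and the
  join (componentwise max) are the library's pointwise order / sup on functions.\<close>

definition vecs :: "nat \<Rightarrow> (nat \<Rightarrow> nat) set" where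
  "vecs n = {a. \<forall>j\<ge>n. a j = 0}"

text \<open>A monomial ideal of K[X_1..X_n], represented by the set of exponents of the
  monomials it contains (an upward closed subset of N^n).\<close>
definition monomial_ideal :: "nat \<Rightarrow> (nat \<Rightarrow> nat) set \<Rightarrow> bool" where
  "monomial_ideal n M \<longleftrightarrow> M \<subseteq> vecs n \<and> (\<forall>a\<in>M. \<forall>b\<in>vecs n. a \<le> b \<longrightarrow> b \<in> M)"

text \<open>Monomials of the ideal of K[X_1..X_n] generated by the monomials with exponents in S.\<close>
definition gen_ideal :: "nat \<Rightarrow> (nat \<Rightarrow> nat) set \<Rightarrow> (nat \<Rightarrow> nat) set" where
  "gen_ideal n S = {b \<in> vecs n. \<exists>s\<in>S. s \<le> b}"

text \<open>Monomials of X^a K[Z], Z a set of variable indices.\<close>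
definition cone :: "nat \<Rightarrow> (nat \<Rightarrow> nat) \<Rightarrow> nat set \<Rightarrow> (nat \<Rightarrow> nat) set" where
  "cone n a Z = {(\<lambda>j. a j + b j) | b. b \<in> vecs n \<and> (\<forall>j. j \<notin> Z \<longrightarrow> b j = 0)}"

text \<open>Stanley decomposition I/J = (+)_{i in Omega} X^(a i) K[Z i] (fine multigrading):
  since all spaces are spanned by monomials, this says the monomial sets of the
  summands are pairwise disjoint and their union is the set of monomials in I minus J.\<close>
definition stanley_decomp ::
  "nat \<Rightarrow> (nat \<Rightarrow> nat) set \<Rightarrow> (nat \<Rightarrow> nat) set \<Rightarrow> 'i set \<Rightarrow> ('i \<Rightarrow> nat \<Rightarrow> nat) \<Rightarrow> ('i \<Rightarrow> nat set) \<Rightarrow> bool" where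
  "stanley_decomp n I J \<Omega> a Z \<longleftrightarrow>
     finite \<Omega> \<and> (\<forall>i\<in>\<Omega>. a i \<in> vecs n \<and> Z i \<subseteq> {..<n}) \<and>
     (\<forall>i\<in>\<Omega>. \<forall>j\<in>\<Omega>. i \<noteq> j \<longrightarrow> cone n (a i) (Z i) \<inter> cone n (a j) (Z j) = {}) \<and>
     (\<Union>i\<in>\<Omega>. cone n (a i) (Z i)) = I - J"

end

theory Submission
  imports Defs
begin

lemma cone_sup:
  assumes p: "p \<in> vecs m" and c: "c \<in> cone m p Z" and q: "q \<in> vecs m" and qc: "q \<le> c"
  shows "sup p q \<in> cone m p Z"
proof -
  obtain b where cb: "c = (\<lambda>j. p j + b j)" and b: "b \<in> vecs m" "\<forall>j. j \<notin> Z \<longrightarrow> b j = 0"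
    using c unfolding cone_def by blast
  define b' where "b' = (\<lambda>j. sup p q j - p j)"
  have "b' \<in> vecs m" using p q unfolding vecs_def b'_def by auto
  moreover have "\<forall>j. j \<notin> Z \<longrightarrow> b' j = 0"
  proof (intro allI impI)
    fix j assume "j \<notin> Z"
    have "q j \<le> c j" using qc by (simp add: le_fun_def)
    then have "q j \<le> p j" using b cb \<open>j \<notin> Z\<close> by simp
    then show "b' j = 0" by (simp add: b'_def)
  qed
  moreover have "sup p q = (\<lambda>j. p j + b' j)" by (auto simp: b'_def)
  ultimately show ?thesis unfolding cone_def by blast
qed

lemma cone_ge:
  assumes "c \<in> cone m p Z" shows "p \<le> c"
  using assms unfolding cone_def by (auto simp: le_fun_def)

lemma cone_vecs:
  assumes "p \<in> vecs m" "c \<in> cone m p Z" shows "c \<in> vecs m"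
  using assms unfolding cone_def vecs_def by auto

lemma cone_self:
  assumes "p \<in> vecs m" shows "p \<in> cone m p Z"
proof -
  have "(\<lambda>j. 0::nat) \<in> vecs m" by (simp add: vecs_def)
  moreover have "p = (\<lambda>j. p j + (\<lambda>j. 0::nat) j)" by simp
  ultimately have "\<exists>b. p = (\<lambda>j. p j + b j) \<and> b \<in> vecs m \<and> (\<forall>j. j \<notin> Z \<longrightarrow> b j = 0)"
    by (intro exI[of _ "\<lambda>j. 0"]) simp
  then show ?thesis unfolding cone_def by (simp only: mem_Collect_eq)
qed

lemma vecs_sup: "x \<in> vecs m \<Longrightarrow> y \<in> vecs m \<Longrightarrow> sup x y \<in> vecs m"
  by (simp add: vecs_def)

theorem lemma4p2:
  fixes n n' :: nat
    and I J :: "(nat \<Rightarrow> nat) set"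
    and \<phi> :: "(nat \<Rightarrow> nat) \<Rightarrow> (nat \<Rightarrow> nat)"
    and \<Omega> :: "'i set"
    and a :: "'i \<Rightarrow> nat \<Rightarrow> nat"
    and Z Z' :: "'i \<Rightarrow> nat set"
  assumes I: "monomial_ideal n I" and J: "monomial_ideal n J" and JI: "J \<subset> I"
    and phi_map: "\<phi> ` vecs n \<subseteq> vecs n'"
    and fin: "finite \<Omega>"
    and SD: "stanley_decomp n I J \<Omega> a Z"
    and Z': "\<forall>i\<in>\<Omega>. Z' i \<subseteq> {..<n'}"
    and inj: "inj_on \<phi> (vecs n)"
    and mono: "mono_on (vecs n) \<phi>"
    and join: "\<forall>x\<in>vecs n. \<forall>y\<in>vecs n. \<phi> (sup x y) = sup (\<phi> x) (\<phi> y)"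
    and cap: "\<forall>i\<in>\<Omega>. cone n' (\<phi> (a i)) (Z' i) \<inter> \<phi> ` vecs n = \<phi> ` cone n (a i) (Z i)"
  shows "(\<forall>i\<in>\<Omega>. \<forall>j\<in>\<Omega>. i \<noteq> j \<longrightarrow> cone n' (\<phi> (a i)) (Z' i) \<inter> cone n' (\<phi> (a j)) (Z' j) = {})
       \<and> (\<Union>i\<in>\<Omega>. cone n' (\<phi> (a i)) (Z' i)) \<subseteq> gen_ideal n' (\<phi> ` I) - gen_ideal n' (\<phi> ` J)"
proof -
  have av: "\<forall>i\<in>\<Omega>. a i \<in> vecs n" and disj: "\<forall>i\<in>\<Omega>. \<forall>j\<in>\<Omega>. i \<noteq> j \<longrightarrow> cone n (a i) (Z i) \<inter> cone n (a j) (Z j) = {}"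
    and un: "(\<Union>i\<in>\<Omega>. cone n (a i) (Z i)) = I - J"
    using SD unfolding stanley_decomp_def by auto
  have key: "sup (a i) x \<in> cone n (a i) (Z i)"
    if i: "i \<in> \<Omega>" and x: "x \<in> vecs n" and c: "c \<in> cone n' (\<phi> (a i)) (Z' i)" and le: "\<phi> x \<le> c" for i x c
  proof -
    have pa: "\<phi> (a i) \<in> vecs n'" using phi_map av i by auto
    have px: "\<phi> x \<in> vecs n'" using phi_map x by auto
    have sv: "sup (a i) x \<in> vecs n" using av i x vecs_sup by blast
    have "sup (\<phi> (a i)) (\<phi> x) \<in> cone n' (\<phi> (a i)) (Z' i)" using cone_sup[OF pa c px le] .
    moreover have "\<phi> (sup (a i) x) = sup (\<phi> (a i)) (\<phi> x)" using join av i x by blast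
    ultimately have "\<phi> (sup (a i) x) \<in> cone n' (\<phi> (a i)) (Z' i) \<inter> \<phi> ` vecs n"
      using sv by (metis IntI image_eqI)
    then have "\<phi> (sup (a i) x) \<in> \<phi> ` cone n (a i) (Z i)" using cap i by blast
    then obtain y where y: "y \<in> cone n (a i) (Z i)" "\<phi> (sup (a i) x) = \<phi> y" by blast
    have "y \<in> vecs n" using cone_vecs[OF _ y(1)] av i by blast
    then have "y = sup (a i) x" using inj sv y(2) by (metis inj_on_def)
    then show ?thesis using y by simp
  qed
  have P1: "\<forall>i\<in>\<Omega>. \<forall>j\<in>\<Omega>. i \<noteq> j \<longrightarrow> cone n' (\<phi> (a i)) (Z' i) \<inter> cone n' (\<phi> (a j)) (Z' j) = {}"
  proof (intro ballI impI)
    fix i j assume i: "i \<in> \<Omega>" and j: "j \<in> \<Omega>" and ij: "i \<noteq> j"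
    show "cone n' (\<phi> (a i)) (Z' i) \<inter> cone n' (\<phi> (a j)) (Z' j) = {}"
    proof (rule ccontr)
      assume "cone n' (\<phi> (a i)) (Z' i) \<inter> cone n' (\<phi> (a j)) (Z' j) \<noteq> {}"
      then obtain c where ci: "c \<in> cone n' (\<phi> (a i)) (Z' i)" and cj: "c \<in> cone n' (\<phi> (a j)) (Z' j)" by blast
      have 1: "sup (a i) (a j) \<in> cone n (a i) (Z i)"
        using key[OF i _ ci cone_ge[OF cj]] av j by blast
      have 2: "sup (a j) (a i) \<in> cone n (a j) (Z j)"
        using key[OF j _ cj cone_ge[OF ci]] av i by blast
      have "sup (a j) (a i) = sup (a i) (a j)" by (simp add: sup_commute)
      then show False using 1 2 disj i j ij by auto
    qed
  qed
  have P2: "(\<Union>i\<in>\<Omega>. cone n' (\<phi> (a i)) (Z' i)) \<subseteq> gen_ideal n' (\<phi> ` I) - gen_ideal n' (\<phi> ` J)"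
  proof
    fix c assume "c \<in> (\<Union>i\<in>\<Omega>. cone n' (\<phi> (a i)) (Z' i))"
    then obtain i where i: "i \<in> \<Omega>" and c: "c \<in> cone n' (\<phi> (a i)) (Z' i)" by blast
    have pa: "\<phi> (a i) \<in> vecs n'" using phi_map av i by auto
    have cv: "c \<in> vecs n'" using cone_vecs[OF pa c] .
    have "a i \<in> cone n (a i) (Z i)" using cone_self av i by blast
    then have aI: "a i \<in> I - J" using un i by blast
    have "c \<in> gen_ideal n' (\<phi> ` I)"
      unfolding gen_ideal_def using cv aI cone_ge[OF c] by blast
    moreover have "c \<notin> gen_ideal n' (\<phi> ` J)"
    proof
      assume "c \<in> gen_ideal n' (\<phi> ` J)"
      then obtain s where s: "s \<in> J" "\<phi> s \<le> c" unfolding gen_ideal_def by blast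
      have sv: "s \<in> vecs n" using J s(1) unfolding monomial_ideal_def by blast
      have "sup (a i) s \<in> cone n (a i) (Z i)" using key[OF i sv c s(2)] .
      then have ni: "sup (a i) s \<notin> J" using un i by blast
      have "sup (a i) s \<in> vecs n" using av i sv vecs_sup by blast
      then have "sup (a i) s \<in> J" using J s(1) unfolding monomial_ideal_def by auto
      then show False using ni by blast
    qed
    ultimately show "c \<in> gen_ideal n' (\<phi> ` I) - gen_ideal n' (\<phi> ` J)" by blast
  qed
  show ?thesis using P1 P2 by blast
qed

end
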